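(* Let $\varepsilon\in\mathbb R$ and let $u\in C^4([-1,1])$ be positive. With $H:=\frac12\bigl(\frac{1}{u\sqrt{1+u'^2}}-\frac{u''}{(1+u'^2)^{3/2}}\bigr)$ define $$M[u](x):=\frac{u(x)u'(x)H'(x)}{1+u'(x)^2}+\frac{u(x)H(x)^2}{\sqrt{1+u'(x)^2}}-\frac{H(x)}{1+u'(x)^2}-\varepsilon\frac{u(x)}{\sqrt{1+u'(x)^2}}.$$ Then $$\frac{d}{dx}M[u](x)=u(x)u'(x)\Bigl\{\frac{1}{u\sqrt{1+u'^2}}\frac{d}{dx}\Bigl(\frac{u}{\sqrt{1+u'^2}}H'\Bigr)+\frac12H\Bigl(\frac{u''}{(1+u'^2)^{3/2}}+\frac{1}{u\sqrt{1+u'^2}}\Bigr)^2-2\varepsilon H\Bigr\}(x).$$ *)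

theory Defs
  imports "HOL-Analysis.Analysis"
begin

text \<open>Mean-curvature-type quantity
  H = 1/2 (1/(u sqrt(1+u'^2)) - u''/(1+u'^2)^(3/2)),
  with u1, u2 standing for u', u''.\<close>
definition Hc :: "(real \<Rightarrow> real) \<Rightarrow> (real \<Rightarrow> real) \<Rightarrow> (real \<Rightarrow> real) \<Rightarrow> real \<Rightarrow> real" where
  "Hc u u1 u2 x = (1 / (u x * sqrt (1 + (u1 x)^2)) - u2 x / (1 + (u1 x)^2) powr (3/2)) / 2"

definition Hp :: "(real \<Rightarrow> real) \<Rightarrow> (real \<Rightarrow> real) \<Rightarrow> (real \<Rightarrow> real) \<Rightarrow> real \<Rightarrow> real" where
  "Hp u u1 u2 x = vector_derivative (Hc u u1 u2) (at x within {-1..1})"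

definition Mc :: "real \<Rightarrow> (real \<Rightarrow> real) \<Rightarrow> (real \<Rightarrow> real) \<Rightarrow> (real \<Rightarrow> real) \<Rightarrow> real \<Rightarrow> real" where
  "Mc eps u u1 u2 x =
     u x * u1 x * Hp u u1 u2 x / (1 + (u1 x)^2)
     + u x * (Hc u u1 u2 x)^2 / sqrt (1 + (u1 x)^2)
     - Hc u u1 u2 x / (1 + (u1 x)^2)
     - eps * u x / sqrt (1 + (u1 x)^2)"

end

theory Submission
  imports Defs
begin

lemma alg:
  fixes u a b r H P Q e :: real
  assumes "u>0" "r>0" "r^2 = 1+a^2" "H = (1/(u*r) - b/r^3)/2"
  shows "((a*a*P + u*b*P + u*a*Q)*r^2 - u*a*P*(2*a*b))/(r^2)^2
    + ((a*H^2 + u*2*H*P)*r - u*H^2*(a*b/r))/r^2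
    - (P*r^2 - H*2*a*b)/(r^2)^2
    - (e*a*r - e*u*(a*b/r))/r^2
   = u*a*(1/(u*r)*(a/r*P + u*(-(a*b/r)/r^2)*P + u/r*Q) + 1/2*H*(b/r^3 + 1/(u*r))^2 - 2*e*H)"
proof -
  have W: "r^2 = 1+a^2" using assms(3) by simp
  show ?thesis unfolding assms(4) using assms(1,2)
    apply (simp add: field_simps)
    using W by algebra
qed

lemma powr32: "(1 + (a::real)^2) powr (3/2) = (sqrt (1 + a^2))^3"
proof -
  have p: "0 < 1 + a^2" by (simp add: add_pos_nonneg)
  have e: "(3/2::real) = 1 + 1/2" by simp
  have "(1 + a^2) powr (3/2) = (1 + a^2) * sqrt (1 + a^2)"
    unfolding e powr_add using p by (simp add: powr_half_sqrt)
  also have "\<dots> = (sqrt (1 + a^2))^3"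
    using p by (simp add: power3_eq_cube)
  finally show ?thesis .
qed

theorem lemmaB1:
  fixes eps :: real and u u1 u2 u3 u4 :: "real \<Rightarrow> real"
  assumes pos: "\<forall>x\<in>{-1..1}. u x > 0"
    and d1: "\<forall>x\<in>{-1..1}. (u has_real_derivative u1 x) (at x within {-1..1})"
    and d2: "\<forall>x\<in>{-1..1}. (u1 has_real_derivative u2 x) (at x within {-1..1})"
    and d3: "\<forall>x\<in>{-1..1}. (u2 has_real_derivative u3 x) (at x within {-1..1})"
    and d4: "\<forall>x\<in>{-1..1}. (u3 has_real_derivative u4 x) (at x within {-1..1})"
    and c4: "continuous_on {-1..1} u4"
  shows "\<forall>x\<in>{-1..1}. (Mc eps u u1 u2 has_real_derivative
      u x * u1 x *
        (1 / (u x * sqrt (1 + (u1 x)^2)) *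
           vector_derivative (\<lambda>y. u y / sqrt (1 + (u1 y)^2) * Hp u u1 u2 y) (at x within {-1..1})
         + 1/2 * Hc u u1 u2 x *
             (u2 x / (1 + (u1 x)^2) powr (3/2) + 1 / (u x * sqrt (1 + (u1 x)^2)))^2
         - 2 * eps * Hc u u1 u2 x))
      (at x within {-1..1})"
proof -
  define r where "r y = sqrt (1 + (u1 y)^2)" for y
  have Wpos: "0 < 1 + (u1 y)^2" for y by (simp add: add_pos_nonneg)
  have rpos: "r y > 0" for y unfolding r_def using Wpos by simp
  have rx: "sqrt (1 + (u1 y)^2) = r y" for y by (simp add: r_def)
  have rne: "r y \<noteq> 0" for y using rpos[of y] by simp
  have Wne: "1 + (u1 y)^2 \<noteq> 0" for y using Wpos[of y] by simp
  have r2: "(r y)^2 = 1 + (u1 y)^2" for y unfolding r_def using Wpos by simp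
  have Hc_eq: "Hc u u1 u2 = (\<lambda>y. (1/(u y * r y) - u2 y / (r y)^3)/2)"
    by (rule ext) (simp add: Hc_def powr32 r_def)
  have dr: "(r has_real_derivative u1 x * u2 x / r x) (at x within {-1..1})"
    if x: "x \<in> {-1..1}" for x
    unfolding r_def using x Wpos[of x]
    by (auto intro!: derivative_eq_intros d2[rule_format] simp: field_simps)
  define D1 where "D1 = (\<lambda>y. (-(u1 y * r y + u y * (u1 y*u2 y/r y))/(u y * r y)^2
      - (u3 y * (r y)^3 - u2 y * (3*(r y)^2*(u1 y*u2 y/r y)))/((r y)^3)^2)/2)"
  have dH: "(Hc u u1 u2 has_real_derivative D1 x) (at x within {-1..1})"
    if x: "x \<in> {-1..1}" for x
  proof -
    have ux: "u x > 0" using pos x by auto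
    show ?thesis
    unfolding Hc_eq using ux x rpos[of x]
    apply (auto intro!: derivative_eq_intros d1[rule_format] d3[rule_format] dr
       simp: D1_def)
    apply (simp add: power2_eq_square algebra_simps)
    done
  qed
  have Hp_eq: "Hp u u1 u2 x = D1 x" if x: "x \<in> {-1..1}" for x
    unfolding Hp_def
    apply (rule vector_derivative_within_closed_interval)
    using x dH[OF x] by (auto simp: has_real_derivative_iff_has_vector_derivative)
  have dD1: "\<exists>D. (D1 has_real_derivative D) (at x within {-1..1})" if x: "x \<in> {-1..1}" for x
  proof -
    have ux: "u x > 0" using pos x by auto
    show ?thesis
      unfolding D1_def
      apply (rule exI)
      apply (rule derivative_intros DERIV_const DERIV_power d1[rule_format, OF x] d2[rule_format, OF x]
        d3[rule_format, OF x] d4[rule_format, OF x] dr[OF x] | use ux rpos[of x] in simp)+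
      done
  qed
  have "\<forall>x\<in>{-1..1}. \<exists>D. (D1 has_real_derivative D) (at x within {-1..1})"
    using dD1 by blast
  then obtain Hpp where Hpp: "\<forall>x\<in>{-1..1}. (D1 has_real_derivative Hpp x) (at x within {-1..1})"
    by (metis bchoice)
  have dHp: "(Hp u u1 u2 has_real_derivative Hpp x) (at x within {-1..1})"
    if x: "x \<in> {-1..1}" for x
    by (rule has_field_derivative_transform_within[OF Hpp[rule_format,OF x] zero_less_one x])
      (simp add: Hp_eq)
  have dHc: "(Hc u u1 u2 has_real_derivative Hp u u1 u2 x) (at x within {-1..1})"
    if x: "x \<in> {-1..1}" for x
    using dH[OF x] Hp_eq[OF x] by simp
  have rr: "(\<lambda>y. u y / sqrt (1 + (u1 y)^2) * Hp u u1 u2 y) = (\<lambda>y. u y / r y * Hp u u1 u2 y)"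
    by (simp add: r_def)
  have dP: "((\<lambda>y. u y / sqrt (1 + (u1 y)^2) * Hp u u1 u2 y) has_real_derivative
     u1 x / r x * Hp u u1 u2 x + u x * (-(u1 x*u2 x/r x)/(r x)^2) * Hp u u1 u2 x + u x / r x * Hpp x)
     (at x within {-1..1})"
    if x: "x \<in> {-1..1}" for x
    unfolding rr
    apply (rule derivative_eq_intros refl d1[rule_format, OF x] dr[OF x] dHp[OF x] rne)+
    using rpos[of x] by (simp add: field_simps power2_eq_square)
  have vd: "vector_derivative (\<lambda>y. u y / sqrt (1 + (u1 y)^2) * Hp u u1 u2 y) (at x within {-1..1})
     = u1 x / r x * Hp u u1 u2 x + u x * (-(u1 x*u2 x/r x)/(r x)^2) * Hp u u1 u2 x + u x / r x * Hpp x"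
    if x: "x \<in> {-1..1}" for x
    apply (rule vector_derivative_within_closed_interval)
    using x dP[OF x] by (auto simp: has_real_derivative_iff_has_vector_derivative)
  have Mc_eq: "Mc eps u u1 u2 = (\<lambda>y. u y * u1 y * Hp u u1 u2 y / (1 + (u1 y)^2)
     + u y * (Hc u u1 u2 y)^2 / r y - Hc u u1 u2 y / (1 + (u1 y)^2) - eps * u y / r y)"
    by (rule ext) (simp add: Mc_def r_def)
  show ?thesis
  proof
    fix x :: real assume x: "x \<in> {-1..1}"
    have ux: "u x > 0" using pos x by auto
    let ?a = "u1 x" and ?b = "u2 x" and ?r = "r x" and ?H = "Hc u u1 u2 x"
      and ?P = "Hp u u1 u2 x" and ?Q = "Hpp x" and ?u = "u x"
    have dM: "(Mc eps u u1 u2 has_real_derivative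
      ((?a*?a*?P + ?u*?b*?P + ?u*?a*?Q)*?r^2 - ?u*?a*?P*(2*?a*?b))/(?r^2)^2
    + ((?a*?H^2 + ?u*2*?H*?P)*?r - ?u*?H^2*(?a*?b/?r))/?r^2
    - (?P*?r^2 - ?H*2*?a*?b)/(?r^2)^2
    - (eps*?a*?r - eps*?u*(?a*?b/?r))/?r^2) (at x within {-1..1})"
      unfolding Mc_eq
      apply (rule derivative_eq_intros refl d1[rule_format, OF x] d2[rule_format, OF x]
         dr[OF x] dHp[OF x] dHc[OF x] rne Wne)+
      apply (simp only: r2[symmetric])
      using rpos[of x] apply (simp add: field_simps)
      by algebra
    have Heq: "?H = (1/(?u * ?r) - ?b / ?r^3)/2" by (simp add: Hc_eq)
    have A: "((?a*?a*?P + ?u*?b*?P + ?u*?a*?Q)*?r^2 - ?u*?a*?P*(2*?a*?b))/(?r^2)^2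
    + ((?a*?H^2 + ?u*2*?H*?P)*?r - ?u*?H^2*(?a*?b/?r))/?r^2
    - (?P*?r^2 - ?H*2*?a*?b)/(?r^2)^2
    - (eps*?a*?r - eps*?u*(?a*?b/?r))/?r^2
     = ?u*?a*(1/(?u*?r)*(?a/?r*?P + ?u*(-(?a*?b/?r)/?r^2)*?P + ?u/?r*?Q)
        + 1/2*?H*(?b/?r^3 + 1/(?u*?r))^2 - 2*eps*?H)"
      by (rule alg[OF ux rpos r2 Heq])
    show "(Mc eps u u1 u2 has_real_derivative
      u x * u1 x *
        (1 / (u x * sqrt (1 + (u1 x)^2)) *
           vector_derivative (\<lambda>y. u y / sqrt (1 + (u1 y)^2) * Hp u u1 u2 y) (at x within {-1..1})
         + 1/2 * Hc u u1 u2 x *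
             (u2 x / (1 + (u1 x)^2) powr (3/2) + 1 / (u x * sqrt (1 + (u1 x)^2)))^2
         - 2 * eps * Hc u u1 u2 x))
      (at x within {-1..1})"
      unfolding vd[OF x] unfolding powr32 rx using dM[unfolded A] .
  qed
qed
end
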